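(* Let $T$ be a tree, $uv\in E(T)$, and $T_u$ the connected component of $T\setminus uv$ containing $u$. If $u$ is saturated in $T_u$, then $u$ is saturated in $T$.
   Context: A $2$-matching of a graph $G$ is a set of edges such that every vertex is incident to at most two of them; a maximum $2$-matching is one of largest possible size. A vertex $w$ is saturated in $G$ if every maximum $2$-matching of $G$ has exactly two edges incident to $w$. *)

theory Defs
  imports Main
begin

definition simple_graph :: "'a set \<Rightarrow> 'a set set \<Rightarrow> bool" where
  "simple_graph V E \<longleftrightarrow> finite V \<and>
     (\<forall>e\<in>E. \<exists>x y. x \<noteq> y \<and> x \<in> V \<and> y \<in> V \<and> e = {x, y})"

definition adj_rel :: "'a set set \<Rightarrow> ('a \<times> 'a) set" where
  "adj_rel E = {(x, y). {x, y} \<in> E}"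

definition connected_graph :: "'a set \<Rightarrow> 'a set set \<Rightarrow> bool" where
  "connected_graph V E \<longleftrightarrow> V \<noteq> {} \<and> (\<forall>x\<in>V. \<forall>y\<in>V. (x, y) \<in> (adj_rel E)\<^sup>*)"

definition is_cycle :: "'a set set \<Rightarrow> 'a list \<Rightarrow> bool" where
  "is_cycle E xs \<longleftrightarrow> length xs \<ge> 3 \<and> distinct xs \<and>
     (\<forall>i. Suc i < length xs \<longrightarrow> {xs ! i, xs ! Suc i} \<in> E) \<and>
     {last xs, hd xs} \<in> E"

definition acyclic_graph :: "'a set set \<Rightarrow> bool" where
  "acyclic_graph E \<longleftrightarrow> (\<nexists>xs. is_cycle E xs)"

definition is_tree :: "'a set \<Rightarrow> 'a set set \<Rightarrow> bool" where
  "is_tree V E \<longleftrightarrow> simple_graph V E \<and> connected_graph V E \<and> acyclic_graph E"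

definition deg_in :: "'a set set \<Rightarrow> 'a \<Rightarrow> nat" where
  "deg_in M w = card {e \<in> M. w \<in> e}"

definition two_matching :: "'a set set \<Rightarrow> 'a set set \<Rightarrow> bool" where
  "two_matching E M \<longleftrightarrow> M \<subseteq> E \<and> (\<forall>w. deg_in M w \<le> 2)"

definition max_two_matching :: "'a set set \<Rightarrow> 'a set set \<Rightarrow> bool" where
  "max_two_matching E M \<longleftrightarrow> two_matching E M \<and>
     (\<forall>M'. two_matching E M' \<longrightarrow> card M' \<le> card M)"

definition saturated :: "'a set set \<Rightarrow> 'a \<Rightarrow> bool" where
  "saturated E w \<longleftrightarrow> (\<forall>M. max_two_matching E M \<longrightarrow> deg_in M w = 2)"

definition component_verts :: "'a set \<Rightarrow> 'a set set \<Rightarrow> 'a \<Rightarrow> 'a set" where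
  "component_verts V E' u = {x \<in> V. (u, x) \<in> (adj_rel E')\<^sup>*}"

definition component_edges :: "'a set \<Rightarrow> 'a set set \<Rightarrow> 'a \<Rightarrow> 'a set set" where
  "component_edges V E' u = {e \<in> E'. e \<subseteq> component_verts V E' u}"

end

theory Submission
  imports Defs
begin

definition vdisj :: "'a set set \<Rightarrow> 'a set set \<Rightarrow> bool" where
  "vdisj A B \<longleftrightarrow> (\<forall>e\<in>A. \<forall>e'\<in>B. e \<inter> e' = {})"

lemma tm_finite: "finite E \<Longrightarrow> two_matching E M \<Longrightarrow> finite M"
  unfolding two_matching_def using finite_subset by blast

lemma tm_empty: "two_matching E {}"
  unfolding two_matching_def deg_in_def by simp

lemma ex_max: assumes "finite E" shows "\<exists>M. max_two_matching E M"
proof -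
  have "\<forall>y. two_matching E y \<longrightarrow> card y < card E + 1"
    using assms by (auto simp: two_matching_def less_Suc_eq_le intro: card_mono)
  then obtain x where "two_matching E x" "\<forall>y. two_matching E y \<longrightarrow> card y \<le> card x"
    using ex_has_greatest_nat[of "two_matching E" "{}" card "card E + 1"] tm_empty by blast
  then show ?thesis unfolding max_two_matching_def by blast
qed

lemma tm_restrict:
  assumes "finite E" "two_matching E M" shows "two_matching A (M \<inter> A)"
proof -
  have fM: "finite M" using assms tm_finite by blast
  { fix w
    have "deg_in (M \<inter> A) w \<le> deg_in M w" unfolding deg_in_def
      by (rule card_mono) (use fM in auto)
    also have "\<dots> \<le> 2" using assms(2) unfolding two_matching_def by blast
    finally have "deg_in (M \<inter> A) w \<le> 2" . }
  then show ?thesis unfolding two_matching_def by blast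
qed

lemma tm_super: "two_matching G M \<Longrightarrow> G \<subseteq> F \<Longrightarrow> two_matching F M"
  unfolding two_matching_def by blast

lemma max_card: "max_two_matching E M \<Longrightarrow> two_matching E M' \<Longrightarrow> card M \<le> card M'
   \<Longrightarrow> max_two_matching E M'"
  unfolding max_two_matching_def by (meson order_trans)

lemma tm_union:
  assumes "finite A" "finite B" "two_matching A MA" "two_matching B MB" "vdisj A B"
  shows "two_matching (A \<union> B) (MA \<union> MB)"
proof -
  have sub: "MA \<subseteq> A" "MB \<subseteq> B" using assms unfolding two_matching_def by auto
  { fix w
    have eq: "{e \<in> MA \<union> MB. w \<in> e} = {e \<in> MA. w \<in> e} \<union> {e \<in> MB. w \<in> e}" by auto
    have "{e \<in> MA. w \<in> e} = {} \<or> {e \<in> MB. w \<in> e} = {}"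
      using assms(5) sub unfolding vdisj_def by blast
    moreover have "card {e \<in> MA. w \<in> e} \<le> 2" "card {e \<in> MB. w \<in> e} \<le> 2"
      using assms(3,4) unfolding deg_in_def two_matching_def by blast+
    ultimately have "deg_in (MA \<union> MB) w \<le> 2"
      unfolding deg_in_def eq by (elim disjE; simp only: Un_empty_left Un_empty_right) }
  then show ?thesis using sub unfolding two_matching_def by blast
qed

lemma card_union:
  assumes "finite MA" "finite MB" "MA \<subseteq> A" "MB \<subseteq> B" "vdisj A B" "\<forall>e\<in>A. e \<noteq> {}"
  shows "card (MA \<union> MB) = card MA + card MB"
proof -
  have "MA \<inter> MB = {}"
  proof (rule ccontr)
    assume "MA \<inter> MB \<noteq> {}"
    then obtain e where "e \<in> A" "e \<in> B" using assms(3,4) by blast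
    then have "e \<inter> e = {}" using assms(5) unfolding vdisj_def by blast
    then show False using assms(6) \<open>e \<in> A\<close> by simp
  qed
  then show ?thesis using assms card_Un_disjoint by blast
qed

lemma deg_insert_le: "finite M \<Longrightarrow> deg_in (insert e M) x \<le> deg_in M x + 1"
proof -
  assume f: "finite M"
  have sb: "{e' \<in> insert e M. x \<in> e'} \<subseteq> insert e {e' \<in> M. x \<in> e'}" by auto
  have "card {e' \<in> insert e M. x \<in> e'} \<le> card (insert e {e' \<in> M. x \<in> e'})"
    by (rule card_mono) (use f sb in auto)
  also have "\<dots> \<le> card {e' \<in> M. x \<in> e'} + 1" by (simp add: card_insert_le_m1 card_insert_if f)
  finally show ?thesis unfolding deg_in_def .
qed

lemma deg_insert_notin: "x \<notin> e \<Longrightarrow> deg_in (insert e M) x = deg_in M x"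
  unfolding deg_in_def by (auto intro: arg_cong[where f=card])

definition good_edges :: "'a set \<Rightarrow> 'a set set \<Rightarrow> bool" where
  "good_edges V G \<longleftrightarrow> (\<forall>e\<in>G. e \<subseteq> V \<and> (\<exists>a b. a \<noteq> b \<and> e = {a, b}))"

lemma good_mono: "good_edges V F \<Longrightarrow> G \<subseteq> F \<Longrightarrow> good_edges V G"
  unfolding good_edges_def by blast

lemma good_nonempty: "good_edges V G \<Longrightarrow> \<forall>e\<in>G. e \<noteq> {}"
  unfolding good_edges_def by blast

lemma adj_sym: "(x, y) \<in> adj_rel G \<Longrightarrow> (y, x) \<in> adj_rel G"
  unfolding adj_rel_def by (simp add: insert_commute)

lemma reach_sym: "(x, y) \<in> (adj_rel G)\<^sup>* \<Longrightarrow> (y, x) \<in> (adj_rel G)\<^sup>*"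
proof (induction rule: rtrancl_induct)
  case base then show ?case by simp
next
  case (step y z) then show ?case
    by (meson adj_sym converse_rtrancl_into_rtrancl)
qed

lemma comp_closed:
  assumes "good_edges V G" "e \<in> G" "x \<in> e" "x \<in> component_verts V G w"
  shows "e \<in> component_edges V G w"
proof -
  have eV: "e \<subseteq> V" and "\<exists>a b. a \<noteq> b \<and> e = {a, b}" using assms(1,2) unfolding good_edges_def by auto
  then obtain a b where ab: "e = {a, b}" by blast
  have wx: "(w, x) \<in> (adj_rel G)\<^sup>*" using assms(4) unfolding component_verts_def by blast
  have ab1: "(a, b) \<in> adj_rel G" using assms(2) ab unfolding adj_rel_def by simp
  have ab2: "(b, a) \<in> adj_rel G" using ab1 by (rule adj_sym)
  have "x = a \<or> x = b" using assms(3) ab by simp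
  then have "(w, a) \<in> (adj_rel G)\<^sup>* \<and> (w, b) \<in> (adj_rel G)\<^sup>*"
  proof
    assume "x = a" then show ?thesis using wx ab1 by (simp add: rtrancl_into_rtrancl)
  next
    assume "x = b" then show ?thesis using wx ab2 by (simp add: rtrancl_into_rtrancl)
  qed
  then have "e \<subseteq> component_verts V G w" using ab eV unfolding component_verts_def by auto
  then show ?thesis using assms(2) unfolding component_edges_def by blast
qed

lemma comp_vdisj:
  assumes "good_edges V G"
  shows "vdisj (component_edges V G w) (G - component_edges V G w)"
  unfolding vdisj_def
proof (intro ballI)
  fix e e' assume e: "e \<in> component_edges V G w" and e': "e' \<in> G - component_edges V G w"
  show "e \<inter> e' = {}"
  proof (rule ccontr)
    assume "e \<inter> e' \<noteq> {}"
    then obtain x where "x \<in> e" "x \<in> e'" by blast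
    then have "x \<in> component_verts V G w" using e unfolding component_edges_def by blast
    then show False using comp_closed[OF assms _ \<open>x \<in> e'\<close>] e' by blast
  qed
qed

lemma comp_sub: "component_edges V G w \<subseteq> G"
  unfolding component_edges_def by blast

lemma w_notin_rest:
  assumes "good_edges V G" "w \<in> V" "e' \<in> G - component_edges V G w"
  shows "w \<notin> e'"
proof
  assume "w \<in> e'"
  have "w \<in> component_verts V G w" using assms(2) unfolding component_verts_def by blast
  then show False using comp_closed[OF assms(1) _ \<open>w \<in> e'\<close>] assms(3) by blast
qed

lemma comps_disj:
  assumes "(w1, w2) \<notin> (adj_rel G)\<^sup>*"
  shows "vdisj (component_edges V G w1) (component_edges V G w2)"
  unfolding vdisj_def
proof (intro ballI)
  fix e e' assume e: "e \<in> component_edges V G w1" and e': "e' \<in> component_edges V G w2"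
  show "e \<inter> e' = {}"
  proof (rule ccontr)
    assume "e \<inter> e' \<noteq> {}"
    then obtain x where "x \<in> e" "x \<in> e'" by blast
    then have "(w1, x) \<in> (adj_rel G)\<^sup>*" "(w2, x) \<in> (adj_rel G)\<^sup>*"
      using e e' unfolding component_edges_def component_verts_def by blast+
    then have "(w1, w2) \<in> (adj_rel G)\<^sup>*" using reach_sym by (metis rtrancl_trans)
    then show False using assms by blast
  qed
qed

lemma reach_path:
  assumes "(x, y) \<in> (adj_rel G)\<^sup>*"
  shows "\<exists>p. p \<noteq> [] \<and> hd p = x \<and> last p = y \<and> distinct p \<and> successively (\<lambda>a b. {a, b} \<in> G) p"
  using assms
proof (induction rule: rtrancl_induct)
  case base then show ?case by (intro exI[of _ "[x]"]) auto
next
  case (step y z)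
  then obtain p where p: "p \<noteq> []" "hd p = x" "last p = y" "distinct p"
    "successively (\<lambda>a b. {a, b} \<in> G) p" by blast
  have yz: "{y, z} \<in> G" using step(2) unfolding adj_rel_def by simp
  show ?case
  proof (cases "z \<in> set p")
    case True
    then obtain as bs where pa: "p = as @ z # bs" by (meson split_list)
    have "successively (\<lambda>a b. {a, b} \<in> G) (as @ [z])"
      using p(5) unfolding pa by (auto simp: successively_append_iff)
    moreover have "hd (as @ [z]) = x" using p(2) unfolding pa by (cases as) auto
    moreover have "distinct (as @ [z])" using p(4) unfolding pa by auto
    ultimately show ?thesis by (intro exI[of _ "as @ [z]"]) auto
  next
    case False
    have "successively (\<lambda>a b. {a, b} \<in> G) (p @ [z])"
      using p(5) p(3) yz by (auto simp: successively_append_iff)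
    moreover have "hd (p @ [z]) = x" using p(1,2) by simp
    moreover have "distinct (p @ [z])" using p(4) False by auto
    ultimately show ?thesis by (intro exI[of _ "p @ [z]"]) auto
  qed
qed

lemma succ_nth:
  "successively P xs \<Longrightarrow> Suc i < length xs \<Longrightarrow> P (xs ! i) (xs ! Suc i)"
proof (induction P xs arbitrary: i rule: successively.induct)
  case (3 x y xs)
  then show ?case by (cases i) auto
qed auto

lemma succ_mem0:
  "successively P xs \<Longrightarrow> (\<forall>a b. P a b \<longrightarrow> {a, b} \<in> G) \<Longrightarrow> 2 \<le> length xs \<Longrightarrow> z \<in> set xs \<Longrightarrow> \<exists>e\<in>G. z \<in> e"
proof (induction P xs rule: successively.induct)
  case (3 P x y xs)
  then show ?case by (cases xs) auto
qed auto

lemma succ_mem: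
  "successively (\<lambda>a b. {a, b} \<in> G) xs \<Longrightarrow> 2 \<le> length xs \<Longrightarrow> z \<in> set xs \<Longrightarrow> \<exists>e\<in>G. z \<in> e"
  using succ_mem0[of "\<lambda>a b. {a, b} \<in> G" xs G] by blast

lemma cycle_mono: "is_cycle F xs \<Longrightarrow> F \<subseteq> E \<Longrightarrow> is_cycle E xs"
  unfolding is_cycle_def by (meson subsetD)

lemma acyc_mono: "acyclic_graph E \<Longrightarrow> F \<subseteq> E \<Longrightarrow> acyclic_graph F"
  unfolding acyclic_graph_def using cycle_mono by blast

lemma no_reach:
  assumes acyc: "acyclic_graph F" and e1: "{u, w1} \<in> F" and e2: "{u, w2} \<in> F"
    and ne: "w1 \<noteq> w2"
  shows "(w1, w2) \<notin> (adj_rel {e \<in> F. u \<notin> e})\<^sup>*"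
proof
  let ?G = "{e \<in> F. u \<notin> e}"
  assume "(w1, w2) \<in> (adj_rel ?G)\<^sup>*"
  from reach_path[OF this] obtain p where p: "p \<noteq> []" "hd p = w1" "last p = w2" "distinct p"
    "successively (\<lambda>a b. {a, b} \<in> ?G) p" by (elim exE conjE) simp
  obtain a q where pq: "p = a # q" using p(1) by (cases p) auto
  have len: "2 \<le> length p"
  proof (cases q)
    case Nil
    then have "hd p = last p" using pq by simp
    then show ?thesis using p(2,3) ne by simp
  next
    case (Cons b r)
    then show ?thesis using pq by simp
  qed
  have unotin: "u \<notin> set p"
  proof
    assume "u \<in> set p"
    then obtain e where "e \<in> ?G" "u \<in> e" using succ_mem[OF p(5) len] by blast
    then show False by simp
  qed
  let ?xs = "u # p"
  have s: "successively (\<lambda>a b. {a, b} \<in> F) ?xs"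
  proof -
    have "successively (\<lambda>a b. {a, b} \<in> F) p"
      using p(5) by (rule successively_mono) auto
    then show ?thesis using p(2) e1 pq by simp
  qed
  have "is_cycle F ?xs"
    unfolding is_cycle_def
  proof (intro conjI allI impI)
    show "3 \<le> length ?xs" using len by simp
    show "distinct ?xs" using p(4) unotin by simp
    show "{?xs ! i, ?xs ! Suc i} \<in> F" if "Suc i < length ?xs" for i
      using succ_nth[OF s that] .
    show "{last ?xs, hd ?xs} \<in> F" using p(1,3) e2 by (simp add: insert_commute)
  qed
  then show False using acyc unfolding acyclic_graph_def by blast
qed

lemma edge_other:
  assumes "good_edges V F" "e \<in> F" "u \<in> e"
  shows "\<exists>w. w \<noteq> u \<and> e = {u, w} \<and> w \<in> V \<and> u \<in> V"
proof -
  have h: "e \<subseteq> V \<and> (\<exists>a b. a \<noteq> b \<and> e = {a, b})" using assms(1,2) unfolding good_edges_def by (rule bspec)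
  then obtain a b where ab: "a \<noteq> b" "e = {a, b}" "e \<subseteq> V" by (elim conjE exE) simp
  have V: "a \<in> V" "b \<in> V" using ab(2,3) by blast+
  have "u = a \<or> u = b" using assms(3) ab(2) by blast
  then show ?thesis
  proof
    assume "u = a"
    then have "b \<noteq> u \<and> e = {u, b} \<and> b \<in> V \<and> u \<in> V" using ab V by blast
    then show ?thesis by blast
  next
    assume "u = b"
    then have "a \<noteq> u \<and> e = {u, a} \<and> a \<in> V \<and> u \<in> V" using ab V by (simp add: insert_commute)
    then show ?thesis by blast
  qed
qed

lemma deg_zero: "M \<subseteq> {e \<in> F. u \<notin> e} \<Longrightarrow> deg_in M u = 0"
proof -
  assume "M \<subseteq> {e \<in> F. u \<notin> e}"
  then have "{e \<in> M. u \<in> e} = {}" by blast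
  then show ?thesis unfolding deg_in_def by (metis card.empty)
qed

lemma lemG:
  assumes fin: "finite F" and good: "good_edges V F" and acyc: "acyclic_graph F"
    and sat: "saturated F u"
    and L: "two_matching {e \<in> F. u \<notin> e} L"
    and K: "max_two_matching F K"
  shows "card L + 2 \<le> card K"
proof (rule ccontr)
  assume h: "\<not> card L + 2 \<le> card K"
  define G where "G = {e \<in> F. u \<notin> e}"
  have GF: "G \<subseteq> F" unfolding G_def by blast
  have finG: "finite G" using fin GF finite_subset by blast
  have goodG: "good_edges V G" using good GF good_mono by blast
  have neG: "\<forall>e\<in>G. e \<noteq> {}" using good_nonempty[OF goodG] .
  have tmK: "two_matching F K" using K unfolding max_two_matching_def by blast
  have finK: "finite K" using tm_finite[OF fin tmK] .
  obtain NG where NG: "max_two_matching G NG" using ex_max[OF finG] by blast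
  have tmNG: "two_matching G NG" using NG unfolding max_two_matching_def by blast
  have "card L \<le> card NG" using NG L unfolding max_two_matching_def G_def by blast
  have "card NG \<le> card K" using K tm_super[OF tmNG GF] unfolding max_two_matching_def by blast
  have degNG: "deg_in NG u = 0"
    using tmNG unfolding two_matching_def G_def by (intro deg_zero) blast
  have "card NG < card K"
  proof (rule ccontr)
    assume "\<not> card NG < card K"
    then have "max_two_matching F NG" using max_card[OF K tm_super[OF tmNG GF]] by simp
    then show False using sat degNG unfolding saturated_def by simp
  qed
  then have cNG: "card NG + 1 = card K" using h \<open>card L \<le> card NG\<close> by linarith
  have satw: "saturated (component_edges V G w) w" if uw: "{u, w} \<in> F" for w
    unfolding saturated_def
  proof (intro allI impI)
    fix N assume N: "max_two_matching (component_edges V G w) N"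
    define S where "S = component_edges V G w"
    define R where "R = G - S"
    have SG: "S \<subseteq> G" unfolding S_def by (rule comp_sub)
    have finS: "finite S" "finite R" using finG SG unfolding R_def by (auto intro: finite_subset)
    have tmN: "two_matching S N" using N unfolding max_two_matching_def S_def by blast
    obtain NR where NR: "max_two_matching R NR" using ex_max[OF finS(2)] by blast
    have tmNR: "two_matching R NR" using NR unfolding max_two_matching_def by blast
    have finN: "finite N" "finite NR" using tm_finite finS tmN tmNR by blast+
    have wV: "w \<in> V" and wu: "w \<noteq> u" using good uw unfolding good_edges_def
      by (auto simp: doubleton_eq_iff)
    have vd: "vdisj S R" unfolding S_def R_def by (rule comp_vdisj[OF goodG])
    have U: "two_matching G (N \<union> NR)"
      using tm_union[OF finS tmN tmNR vd] SG unfolding R_def by (simp add: Un_absorb1)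
    have cU: "card (N \<union> NR) = card N + card NR"
      by (rule card_union[OF finN _ _ vd]) (use tmN tmNR neG SG in \<open>auto simp: two_matching_def\<close>)
    have finNG: "finite NG" using tm_finite[OF finG tmNG] .
    have "card NG \<le> card (NG \<inter> S) + card (NG \<inter> R)"
    proof -
      have "NG = (NG \<inter> S) \<union> (NG \<inter> R)" using tmNG unfolding two_matching_def R_def by blast
      then show ?thesis by (metis card_Un_le)
    qed
    also have "card (NG \<inter> S) \<le> card N"
      using N tm_restrict[OF finG tmNG, of S] unfolding max_two_matching_def S_def by blast
    also have "card (NG \<inter> R) \<le> card NR"
      using NR tm_restrict[OF finG tmNG, of R] unfolding max_two_matching_def by blast
    finally have c1: "card NG \<le> card (N \<union> NR)" using cU by simp
    show "deg_in N w = 2"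
    proof (rule ccontr)
      assume nd: "deg_in N w \<noteq> 2"
      have "deg_in N w \<le> 2" using tmN unfolding two_matching_def by blast
      then have dNw: "deg_in N w \<le> 1" using nd by simp
      define M' where "M' = insert {u, w} (N \<union> NR)"
      have NRw: "deg_in (N \<union> NR) w = deg_in N w"
      proof -
        have "\<forall>e\<in>NR. w \<notin> e" using tmNR w_notin_rest[OF goodG wV]
          unfolding two_matching_def R_def S_def by blast
        then have "{e \<in> N \<union> NR. w \<in> e} = {e \<in> N. w \<in> e}" by auto
        then show ?thesis unfolding deg_in_def by simp
      qed
      have NRu: "deg_in (N \<union> NR) u = 0"
        using U unfolding two_matching_def G_def by (intro deg_zero) blast
      have finU: "finite (N \<union> NR)" using finN by simp
      have tmM': "two_matching F M'"
        unfolding two_matching_def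
      proof (intro conjI allI)
        show "M' \<subseteq> F" using U GF uw unfolding M'_def two_matching_def by blast
        fix x
        show "deg_in M' x \<le> 2"
        proof (cases "x \<in> {u, w}")
          case True
          then show ?thesis using deg_insert_le[OF finU, of "{u, w}" x] NRw NRu dNw
            unfolding M'_def by auto
        next
          case False
          then show ?thesis using deg_insert_notin[of x "{u,w}" "N \<union> NR"] U
            unfolding M'_def two_matching_def by simp
        qed
      qed
      have "{u, w} \<notin> N \<union> NR" using U unfolding two_matching_def G_def by auto
      then have "card M' = card (N \<union> NR) + 1" unfolding M'_def using finU by simp
      then have "max_two_matching F M'" using max_card[OF K tmM'] c1 cNG by simp
      then have d2: "deg_in M' u = 2" using sat unfolding saturated_def by blast
      have "{e \<in> M'. u \<in> e} = {{u, w}}" using U unfolding M'_def two_matching_def G_def by auto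
      then have "deg_in M' u = 1" unfolding deg_in_def by simp
      then show False using d2 by simp
    qed
  qed
  have "deg_in K u = 2" using sat K unfolding saturated_def by blast
  then obtain e1 e2 where e12: "{e \<in> K. u \<in> e} = {e1, e2}" "e1 \<noteq> e2"
    unfolding deg_in_def card_2_iff by blast
  have e1K: "e1 \<in> K" "u \<in> e1" and e2K: "e2 \<in> K" "u \<in> e2" using e12(1) by blast+
  have KF: "K \<subseteq> F" using tmK unfolding two_matching_def by blast
  obtain w1 where w1: "w1 \<noteq> u" "e1 = {u, w1}" "w1 \<in> V" using edge_other[OF good _ e1K(2)] e1K KF by blast
  obtain w2 where w2: "w2 \<noteq> u" "e2 = {u, w2}" "w2 \<in> V" using edge_other[OF good _ e2K(2)] e2K KF by blast
  have w12: "w1 \<noteq> w2" using e12(2) w1 w2 by blast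
  have nr: "(w1, w2) \<notin> (adj_rel G)\<^sup>*"
    unfolding G_def using no_reach[OF acyc _ _ w12] e1K w1 e2K w2 KF by blast
  define S1 where "S1 = component_edges V G w1"
  define S2 where "S2 = component_edges V G w2"
  define R where "R = G - S1 - S2"
  have S1G: "S1 \<subseteq> G" and S2G: "S2 \<subseteq> G" unfolding S1_def S2_def by (rule comp_sub)+
  have fins: "finite S1" "finite S2" "finite R" using finG S1G S2G unfolding R_def by (auto intro: finite_subset)
  have sat1: "saturated S1 w1" unfolding S1_def using satw e1K w1 KF by blast
  have sat2: "saturated S2 w2" unfolding S2_def using satw e2K w2 KF by blast
  obtain N1 where N1: "max_two_matching S1 N1" using ex_max fins by blast
  obtain N2 where N2: "max_two_matching S2 N2" using ex_max fins by blast
  obtain NR where NR: "max_two_matching R NR" using ex_max fins by blast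
  have tmN: "two_matching S1 N1" "two_matching S2 N2" "two_matching R NR"
    using N1 N2 NR unfolding max_two_matching_def by blast+
  have finN: "finite N1" "finite N2" "finite NR" using tm_finite fins tmN by blast+
  have vd12: "vdisj S1 S2" unfolding S1_def S2_def by (rule comps_disj[OF nr])
  have vd2R: "vdisj S2 R"
    using comp_vdisj[OF goodG, of w2] unfolding vdisj_def R_def S2_def by blast
  have vd1: "vdisj S1 (S2 \<union> R)"
    using comp_vdisj[OF goodG, of w1] vd12 unfolding vdisj_def R_def S1_def by blast
  have U2: "two_matching (S2 \<union> R) (N2 \<union> NR)" by (rule tm_union[OF fins(2,3) tmN(2,3) vd2R])
  have U: "two_matching (S1 \<union> (S2 \<union> R)) (N1 \<union> (N2 \<union> NR))"
    by (rule tm_union[OF fins(1) _ tmN(1) U2 vd1]) (use fins in simp)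
  have GU: "S1 \<union> (S2 \<union> R) = G" using S1G S2G unfolding R_def by blast
  have cU2: "card (N2 \<union> NR) = card N2 + card NR"
    by (rule card_union[OF finN(2,3) _ _ vd2R]) (use tmN neG S2G in \<open>auto simp: two_matching_def\<close>)
  have cU: "card (N1 \<union> (N2 \<union> NR)) = card N1 + (card N2 + card NR)"
    using card_union[OF finN(1) _ _ _ vd1, of "N2 \<union> NR"] cU2 finN tmN U2 neG S1G
    unfolding two_matching_def by auto
  have bigNG: "card N1 + card N2 + card NR \<le> card NG"
    using NG U GU cU unfolding max_two_matching_def by auto
  define KG where "KG = K \<inter> G"
  have Kdec: "K = insert e1 (insert e2 KG)"
    using e12(1) e1K e2K KF unfolding KG_def G_def by blast
  have nin: "e1 \<notin> KG" "e2 \<notin> KG" using e1K e2K unfolding KG_def G_def by auto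
  have finKG: "finite KG" using finK unfolding KG_def by simp
  have cK: "card K = card KG + 2" using finKG nin e12(2) by (subst Kdec) simp
  have tmKG: "two_matching G KG" using tm_restrict[OF fin tmK, of G] unfolding KG_def .
  have small: "card (KG \<inter> S) + 1 \<le> card N" if
    Sdef: "S \<subseteq> G" "finite S" and satS: "saturated S w" and N: "max_two_matching S N"
    and eK: "e \<in> K" "w \<in> e" "e \<notin> G" for S w N e
  proof (rule ccontr)
    assume "\<not> card (KG \<inter> S) + 1 \<le> card N"
    then have "card N \<le> card (KG \<inter> S)" by simp
    then have mx: "max_two_matching S (KG \<inter> S)"
      using max_card[OF N tm_restrict[OF finG tmKG, of S]] by blast
    have "deg_in (KG \<inter> S) w \<le> 1"
    proof -
      have sb: "{x \<in> KG \<inter> S. w \<in> x} \<subseteq> {x \<in> K. w \<in> x} - {e}" using eK unfolding KG_def by blast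
      have "card {x \<in> KG \<inter> S. w \<in> x} \<le> card ({x \<in> K. w \<in> x} - {e})"
        by (rule card_mono) (use finK sb in auto)
      also have "\<dots> = card {x \<in> K. w \<in> x} - 1" using eK finK by (simp add: card_Diff_singleton)
      also have "card {x \<in> K. w \<in> x} \<le> 2" using tmK unfolding two_matching_def deg_in_def by blast
      finally show ?thesis unfolding deg_in_def by simp
    qed
    then show False using satS mx unfolding saturated_def by fastforce
  qed
  have s1: "card (KG \<inter> S1) + 1 \<le> card N1"
    by (rule small[OF S1G fins(1) sat1 N1 e1K(1)]) (use w1 e1K in \<open>auto simp: G_def\<close>)
  have s2: "card (KG \<inter> S2) + 1 \<le> card N2"
    by (rule small[OF S2G fins(2) sat2 N2 e2K(1)]) (use w2 e2K in \<open>auto simp: G_def\<close>)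
  have sR: "card (KG \<inter> R) \<le> card NR"
    using NR tm_restrict[OF finG tmKG, of R] unfolding max_two_matching_def by blast
  have "card KG \<le> card (KG \<inter> S1) + card (KG \<inter> S2) + card (KG \<inter> R)"
  proof -
    have "KG = (KG \<inter> S1) \<union> ((KG \<inter> S2) \<union> (KG \<inter> R))" using GU unfolding KG_def by blast
    then have "card KG \<le> card (KG \<inter> S1) + card ((KG \<inter> S2) \<union> (KG \<inter> R))" by (metis card_Un_le)
    also have "card ((KG \<inter> S2) \<union> (KG \<inter> R)) \<le> card (KG \<inter> S2) + card (KG \<inter> R)" by (rule card_Un_le)
    finally show ?thesis by simp
  qed
  then show False using s1 s2 sR bigNG cK cNG by linarith
qed


theorem proposition2p6:
  fixes V :: "'a set" and E :: "'a set set" and u v :: 'a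
  assumes "is_tree V E"
    and "{u, v} \<in> E"
    and "saturated (component_edges V (E - {{u, v}}) u) u"
  shows "saturated E u"
proof -
  have sg: "simple_graph V E" and acyc: "acyclic_graph E" using assms(1) unfolding is_tree_def by blast+
  have good: "good_edges V E" unfolding good_edges_def
  proof
    fix e assume "e \<in> E"
    then have "\<exists>x y. x \<noteq> y \<and> x \<in> V \<and> y \<in> V \<and> e = {x, y}" using sg unfolding simple_graph_def by blast
    then obtain x y where "x \<noteq> y" "x \<in> V" "y \<in> V" "e = {x, y}" by blast
    then show "e \<subseteq> V \<and> (\<exists>a b. a \<noteq> b \<and> e = {a, b})" by blast
  qed
  have finV: "finite V" using sg unfolding simple_graph_def by blast
  have "E \<subseteq> Pow V"
  proof
    fix e assume "e \<in> E"
    then have "e \<subseteq> V \<and> (\<exists>a b. a \<noteq> b \<and> e = {a, b})" using good unfolding good_edges_def by (rule bspec[rotated])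
    then show "e \<in> Pow V" by simp
  qed
  then have finE: "finite E" by (rule finite_subset) (simp add: finV)
  define uv where "uv = {u, v}"
  define E' where "E' = E - {uv}"
  define Eu where "Eu = component_edges V E' u"
  define Ev where "Ev = E' - Eu"
  have uV: "u \<in> V"
  proof -
    have "{u, v} \<subseteq> V \<and> (\<exists>a b. a \<noteq> b \<and> {u, v} = {a, b})" using good assms(2) unfolding good_edges_def by (rule bspec)
    then show ?thesis by simp
  qed
  have E'E: "E' \<subseteq> E" unfolding E'_def by blast
  have goodE': "good_edges V E'" using good_mono[OF good E'E] .
  have EuE': "Eu \<subseteq> E'" unfolding Eu_def by (rule comp_sub)
  have EuE: "Eu \<subseteq> E" using EuE' E'E by blast
  have EvE: "Ev \<subseteq> E" unfolding Ev_def using E'E by blast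
  have finEu: "finite Eu" and finEv: "finite Ev" using finE EuE EvE finite_subset by blast+
  have goodEu: "good_edges V Eu" using good_mono[OF good EuE] .
  have neE: "\<forall>e\<in>E. e \<noteq> {}" using good_nonempty[OF good] .
  have acycEu: "acyclic_graph Eu" using acyc_mono[OF acyc EuE] .
  have satEu: "saturated Eu u" using assms(3) unfolding Eu_def E'_def uv_def .
  have vd: "vdisj Eu Ev" unfolding Eu_def Ev_def by (rule comp_vdisj[OF goodE'])
  have uvnot: "uv \<notin> Eu" "uv \<notin> Ev" using EuE' unfolding Ev_def E'_def by blast+
  have Edec: "E = insert uv (Eu \<union> Ev)" using EuE' assms(2) unfolding Ev_def E'_def uv_def by blast
  obtain Nu where Nu: "max_two_matching Eu Nu" using ex_max[OF finEu] by blast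
  obtain Nv where Nv: "max_two_matching Ev Nv" using ex_max[OF finEv] by blast
  have tmNu: "two_matching Eu Nu" and tmNv: "two_matching Ev Nv"
    using Nu Nv unfolding max_two_matching_def by blast+
  have finNu: "finite Nu" "finite Nv" using tm_finite finEu finEv tmNu tmNv by blast+
  have U: "two_matching E (Nu \<union> Nv)"
    using tm_union[OF finEu finEv tmNu tmNv vd] EuE EvE tm_super by (metis Un_least)
  have cU: "card (Nu \<union> Nv) = card Nu + card Nv"
    by (rule card_union[OF finNu _ _ vd]) (use tmNu tmNv neE EuE in \<open>auto simp: two_matching_def\<close>)
  show ?thesis unfolding saturated_def
  proof (intro allI impI)
    fix M assume M: "max_two_matching E M"
    have tmM: "two_matching E M" using M unfolding max_two_matching_def by blast
    have finM: "finite M" using tm_finite[OF finE tmM] .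
    have big: "card Nu + card Nv \<le> card M" using M U cU unfolding max_two_matching_def by metis
    have cv: "card (M \<inter> Ev) \<le> card Nv"
      using Nv tm_restrict[OF finE tmM, of Ev] unfolding max_two_matching_def by blast
    have MsubE: "M \<subseteq> E" using tmM unfolding two_matching_def by blast
    have dle: "deg_in M u \<le> 2" using tmM unfolding two_matching_def by blast
    show "deg_in M u = 2"
    proof (cases "uv \<in> M")
      case False
      then have "M = (M \<inter> Eu) \<union> (M \<inter> Ev)" using MsubE Edec by blast
      then have "card M \<le> card (M \<inter> Eu) + card (M \<inter> Ev)" by (metis card_Un_le)
      then have "card Nu \<le> card (M \<inter> Eu)" using big cv by linarith
      then have "max_two_matching Eu (M \<inter> Eu)" using max_card[OF Nu tm_restrict[OF finE tmM]] by blast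
      then have d2: "deg_in (M \<inter> Eu) u = 2" using satEu unfolding saturated_def by blast
      have "deg_in (M \<inter> Eu) u \<le> deg_in M u" unfolding deg_in_def
        by (rule card_mono) (use finM in auto)
      then show ?thesis using d2 dle by simp
    next
      case True
      show ?thesis
      proof (rule ccontr)
        assume nd: "deg_in M u \<noteq> 2"
        then have d1: "card {e \<in> M. u \<in> e} \<le> 1" using dle unfolding deg_in_def by simp
        have uvin: "uv \<in> {e \<in> M. u \<in> e}" using True unfolding uv_def by simp
        have fin1: "finite {e \<in> M. u \<in> e}" using finM by simp
        have only: "\<forall>e\<in>M. u \<in> e \<longrightarrow> e = uv"
        proof (intro ballI impI)
          fix e assume "e \<in> M" "u \<in> e"
          then have "e \<in> {e \<in> M. u \<in> e}" by simp
          then show "e = uv" using d1 uvin fin1 by (metis card_le_Suc0_iff_eq One_nat_def)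
        qed
        define L where "L = M \<inter> Eu"
        have tmL: "two_matching {e \<in> Eu. u \<notin> e} L"
        proof -
          have "two_matching Eu L" unfolding L_def by (rule tm_restrict[OF finE tmM])
          moreover have "L \<subseteq> {e \<in> Eu. u \<notin> e}" using only uvnot unfolding L_def by blast
          ultimately show ?thesis unfolding two_matching_def by blast
        qed
        have "card L + 2 \<le> card Nu" by (rule lemG[OF finEu goodEu acycEu satEu tmL Nu])
        moreover have "card M \<le> card L + card (M \<inter> Ev) + 1"
        proof -
          have "M \<subseteq> insert uv (L \<union> (M \<inter> Ev))" using MsubE Edec unfolding L_def by blast
          then have "card M \<le> card (insert uv (L \<union> (M \<inter> Ev)))"
            by (rule card_mono[rotated]) (use finM in \<open>simp add: L_def\<close>)
          also have "\<dots> \<le> card (L \<union> (M \<inter> Ev)) + 1" by (simp add: card_insert_le_m1 card_insert_if finM L_def)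
          also have "card (L \<union> (M \<inter> Ev)) \<le> card L + card (M \<inter> Ev)" by (rule card_Un_le)
          finally show ?thesis by simp
        qed
        ultimately show False using big cv by linarith
      qed
    qed
  qed
qed

end
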